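(* Let $\gamma$ be a Gutkin curve with contact angle $\alpha$ on the unit sphere $\mathbb{S}^2$, with geodesic curvature $\kappa$, arc-length coordinate $s$ and chord parameterizations $x(t),y(t)$, where the parameter $t$ is chosen so that $\frac{dx}{dt}=\frac{a}{\sqrt{\kappa^2(x)+\sin^2\alpha}}$ and $\frac{dy}{dt}=\frac{a}{\sqrt{\kappa^2(y)+\sin^2\alpha}}$ for a constant $a>0$. Define the function $f$ on $\gamma$, with values in $(0,\pi)$, by $\cot f=\kappa/\sin\alpha$, and set $f_1(t)=f(x(t))$, $f_2(t)=f(y(t))$. Then $$f_1'(t)+f_2'(t)=a\cot\alpha\,\big(\sin f_2(t)-\sin f_1(t)\big).$$
   Context: A smooth convex oriented closed curve $C$ on $\mathbb{S}^2$ is a Gutkin curve with contact angle $\alpha\in(0,\pi]$ if there are parameterizations $x(t),y(t)$ of $C$ with $x'(t),y'(t)>0$, $x(t)\ne y(t)$, such that for every $t$ the geodesic chord from $x(t)$ to $y(t)$ makes angle $\alpha$ with $C$ at both ends: at $x(t)$ the angle between the positively oriented tangent and the chord direction towards $y(t)$, and at $y(t)$ the angle between the chord direction (from $x(t)$ towards $y(t)$) and the positively oriented tangent. With this convention, if $L(x,y)$ is the length of the chord, then $\partial L/\partial x=-\cos\alpha$ and $\partial L/\partial y=\cos\alpha$ along the family. *)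

theory Defs
  imports "HOL-Analysis.Analysis" "HOL-Analysis.Cross3"
begin

definition smooth_curve :: "(real \<Rightarrow> real^3) \<Rightarrow> bool" where
  "smooth_curve \<gamma> \<longleftrightarrow> (\<exists>D :: nat \<Rightarrow> real \<Rightarrow> real^3. D 0 = \<gamma> \<and>
      (\<forall>k s. (D k has_vector_derivative D (Suc k) s) (at s)))"

definition tangent :: "(real \<Rightarrow> real^3) \<Rightarrow> real \<Rightarrow> real^3" where
  "tangent \<gamma> s = vector_derivative \<gamma> (at s)"

definition geod_curv :: "(real \<Rightarrow> real^3) \<Rightarrow> real \<Rightarrow> real" where
  "geod_curv \<gamma> s = inner (cross3 (\<gamma> s) (tangent \<gamma> s)) (vector_derivative (tangent \<gamma>) (at s))"

text \<open>Smooth, simple, closed, unit speed curve on S^2 of length L, positively oriented and convex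
  (geodesic curvature nonnegative w.r.t. the left normal).\<close>
definition convex_sphere_curve :: "(real \<Rightarrow> real^3) \<Rightarrow> real \<Rightarrow> bool" where
  "convex_sphere_curve \<gamma> L \<longleftrightarrow> L > 0 \<and> smooth_curve \<gamma> \<and> (\<forall>s. \<gamma> (s + L) = \<gamma> s)
     \<and> inj_on \<gamma> {0..<L} \<and> (\<forall>s. norm (\<gamma> s) = 1) \<and> (\<forall>s. norm (tangent \<gamma> s) = 1)
     \<and> (\<forall>s. geod_curv \<gamma> s \<ge> 0)"

text \<open>Unit tangent vector at p of the (minimizing) geodesic from p to q on S^2 (p, q not antipodal).\<close>
definition geod_dir :: "real^3 \<Rightarrow> real^3 \<Rightarrow> real^3" where
  "geod_dir p q = (1 / norm (q - inner p q *\<^sub>R p)) *\<^sub>R (q - inner p q *\<^sub>R p)"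

definition chord_angle :: "(real \<Rightarrow> real^3) \<Rightarrow> real \<Rightarrow> real \<Rightarrow> real \<Rightarrow> bool" where
  "chord_angle \<gamma> \<alpha> x y \<longleftrightarrow> \<gamma> x \<noteq> \<gamma> y \<and> \<gamma> x \<noteq> - \<gamma> y
     \<and> inner (tangent \<gamma> x) (geod_dir (\<gamma> x) (\<gamma> y)) = cos \<alpha>
     \<and> inner (- geod_dir (\<gamma> y) (\<gamma> x)) (tangent \<gamma> y) = cos \<alpha>"

end

theory Submission
  imports Defs
begin
unbundle cross3_syntax
unbundle no set_product_syntax


lemma bac_cab: fixes a b c :: "real^3"
  shows "a \<times> (b \<times> c) = inner a c *\<^sub>R b - inner a b *\<^sub>R c"
  unfolding vec_eq_iff forall_3 by (simp add: cross3_def inner_vec_def sum_3 vector_def algebra_simps)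

lemma cross_cross_self: fixes u v :: "real^3"
  shows "u \<times> (u \<times> v) = inner u v *\<^sub>R u - inner u u *\<^sub>R v"
  by (simp add: bac_cab)

lemma triple_cyc: fixes a b c :: "real^3"
  shows "inner (a \<times> b) c = inner b (c \<times> a)"
  by (simp add: cross3_def inner_vec_def sum_3 vector_def algebra_simps)

lemma frame_expand: fixes u v z :: "real^3"
  assumes "norm u = 1" "norm v = 1" "inner u v = 0"
  shows "z = inner z u *\<^sub>R u + inner z v *\<^sub>R v + inner z (u \<times> v) *\<^sub>R (u \<times> v)"
proof -
  define r where "r = z - inner z u *\<^sub>R u - inner z v *\<^sub>R v"
  have vv: "inner v v = 1" using assms(2) by (metis norm_eq_1)
  have uu': "inner u u = 1" using assms(1) by (metis norm_eq_1)
  have ru: "inner r u = 0" unfolding r_def using uu' assms(3)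
    by (simp add: inner_diff_left inner_diff_right inner_commute)
  have rv: "inner r v = 0" unfolding r_def using vv assms(3)
    by (simp add: inner_diff_left inner_diff_right inner_commute)
  have w1: "inner (u \<times> v) (u \<times> v) = 1"
    using norm_cross_dot[of u v] assms by (simp add: power2_norm_eq_inner[symmetric])
  have "r \<times> (u \<times> v) = inner r v *\<^sub>R u - inner r u *\<^sub>R v"
    by (rule bac_cab)
  hence rw: "r \<times> (u \<times> v) = 0" using ru rv by simp
  have "(u \<times> v) \<times> (r \<times> (u \<times> v)) = inner (u \<times> v) (u \<times> v) *\<^sub>R r - inner (u \<times> v) r *\<^sub>R (u \<times> v)"
    by (rule bac_cab)
  hence "r = inner (u \<times> v) r *\<^sub>R (u \<times> v)" using rw w1 by simp
  moreover have "inner (u \<times> v) r = inner z (u \<times> v)"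
    unfolding r_def by (simp add: inner_diff_right dot_cross_self inner_commute)
  ultimately show ?thesis unfolding r_def by (simp add: algebra_simps)
qed



lemma vd_inner:
  fixes f g :: "real \<Rightarrow> 'a::real_inner"
  assumes "(f has_vector_derivative f') (at x)" "(g has_vector_derivative g') (at x)"
  shows "((\<lambda>x. inner (f x) (g x)) has_real_derivative (inner f' (g x) + inner (f x) g')) (at x)"
  using assms unfolding has_vector_derivative_def has_field_derivative_def
  by (auto intro!: derivative_eq_intros simp: inner_scaleR_left inner_scaleR_right algebra_simps)

lemma bb_cross: "bounded_bilinear (cross3 :: real^3 \<Rightarrow> real^3 \<Rightarrow> real^3)"
  using bilinear_cross bilinear_conv_bounded_bilinear by blast

lemma vd_cross:
  fixes f g :: "real \<Rightarrow> real^3"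
  assumes "(f has_vector_derivative f') (at x)" "(g has_vector_derivative g') (at x)"
  shows "((\<lambda>x. f x \<times> g x) has_vector_derivative (f' \<times> g x + f x \<times> g')) (at x)"
proof -
  have "((\<lambda>x. f x \<times> g x) has_derivative (\<lambda>h. f x \<times> (h *\<^sub>R g') + (h *\<^sub>R f') \<times> g x)) (at x)"
    using bounded_bilinear.FDERIV[OF bb_cross] assms unfolding has_vector_derivative_def by blast
  thus ?thesis unfolding has_vector_derivative_def
    by (simp add: cross_mult_left cross_mult_right scaleR_add_right add.commute)
qed

lemma vd_chain:
  assumes "(X has_real_derivative v) (at t)" "(F has_vector_derivative F') (at (X t))"
  shows "((\<lambda>t. F (X t)) has_vector_derivative (v *\<^sub>R F')) (at t)"
  using vector_diff_chain_at[of X v t F F'] assms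
  by (simp add: has_real_derivative_iff_has_vector_derivative o_def)



locale crv =
  fixes D :: "nat \<Rightarrow> real \<Rightarrow> real^3"
  assumes Dd: "\<And>k s. (D k has_vector_derivative D (Suc k) s) (at s)"
    and n0: "\<And>s. norm (D 0 s) = 1" and n1: "\<And>s. norm (D 1 s) = 1"
begin

definition N where "N s = D 0 s \<times> D 1 s"
definition kap where "kap s = inner (N s) (D 2 s)"

lemma i00: "inner (D 0 s) (D 0 s) = 1" using n0 by (metis norm_eq_1)
lemma i11: "inner (D 1 s) (D 1 s) = 1" using n1 by (metis norm_eq_1)

lemma const_deriv0:
  assumes "\<And>s. g s = c" "(g has_real_derivative d) (at s)" shows "d = 0"
proof -
  have "g = (\<lambda>_. c)" using assms(1) by auto
  hence "(g has_real_derivative 0) (at s)" by simp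
  thus ?thesis using assms(2) DERIV_unique by blast
qed

lemma i01: "inner (D 0 s) (D 1 s) = 0"
proof -
  have "((\<lambda>s. inner (D 0 s) (D 0 s)) has_real_derivative (inner (D 1 s) (D 0 s) + inner (D 0 s) (D 1 s))) (at s)"
    using vd_inner[OF Dd Dd] by simp
  from const_deriv0[OF i00 this] show ?thesis by (simp add: inner_commute)
qed

lemma i01s: "inner (D 0 s) (D (Suc 0) s) = 0" "inner (D (Suc 0) s) (D 0 s) = 0"
  "inner (D 1 s) (D 0 s) = 0"
  using i01[of s] by (auto simp: inner_commute)

lemma i12: "inner (D 1 s) (D 2 s) = 0"
proof -
  have "((\<lambda>s. inner (D 1 s) (D 1 s)) has_real_derivative (inner (D 2 s) (D 1 s) + inner (D 1 s) (D 2 s))) (at s)"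
    using vd_inner[OF Dd Dd] by (simp add: numeral_2_eq_2)
  from const_deriv0[OF i11 this] show ?thesis by (simp add: inner_commute)
qed

lemma i02: "inner (D 0 s) (D 2 s) = -1"
proof -
  have "((\<lambda>s. inner (D 0 s) (D 1 s)) has_real_derivative (inner (D 1 s) (D 1 s) + inner (D 0 s) (D 2 s))) (at s)"
    using vd_inner[OF Dd Dd] by (simp add: numeral_2_eq_2)
  from const_deriv0[OF i01 this] show ?thesis using i11 by simp
qed

lemma nN: "norm (N s) = 1"
  using norm_cross_dot[of "D 0 s" "D 1 s"] n0 n1 i01 unfolding N_def
  by (simp add: power2_eq_square) (metis norm_ge_zero abs_of_nonneg real_sqrt_abs real_sqrt_one power2_eq_square)

lemma iN0: "inner (N s) (D 0 s) = 0" "inner (N s) (D 1 s) = 0"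
  unfolding N_def using dot_cross_self by (auto simp: inner_commute)

lemma D2_eq: "D 2 s = - D 0 s + kap s *\<^sub>R N s"
proof -
  have "D 2 s = inner (D 2 s) (D 0 s) *\<^sub>R D 0 s + inner (D 2 s) (D 1 s) *\<^sub>R D 1 s + inner (D 2 s) (D 0 s \<times> D 1 s) *\<^sub>R (D 0 s \<times> D 1 s)"
    by (rule frame_expand[OF n0 n1 i01])
  thus ?thesis using i02 i12 unfolding kap_def N_def by (simp add: inner_commute)
qed

lemma N_deriv: "(N has_vector_derivative (- kap s *\<^sub>R D 1 s)) (at s)"
proof -
  have "((\<lambda>s. D 0 s \<times> D 1 s) has_vector_derivative (D 1 s \<times> D 1 s + D 0 s \<times> D 2 s)) (at s)"
    using vd_cross[OF Dd[of 0 s] Dd[of 1 s]] by (simp only: numeral_2_eq_2 One_nat_def)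
  moreover have "D 1 s \<times> D 1 s + D 0 s \<times> D 2 s = - kap s *\<^sub>R D 1 s"
    unfolding D2_eq[of s] N_def
    by (simp add: Cross3.right_diff_distrib cross_mult_right cross_cross_self i00 i01[unfolded One_nat_def])
  ultimately show ?thesis unfolding N_def[abs_def] by simp
qed

end


lemma norm_sub_proj:
  fixes p q :: "real^3"
  assumes "norm p = 1" "norm q = 1"
  shows "norm (q - inner p q *\<^sub>R p) = sqrt (1 - (inner p q)\<^sup>2)"
proof -
  have pp: "inner p p = 1" "inner q q = 1" using assms by (metis norm_eq_1)+
  have "(norm (q - inner p q *\<^sub>R p))\<^sup>2 = 1 - (inner p q)\<^sup>2"
    unfolding power2_norm_eq_inner using pp
    by (simp add: inner_diff_left inner_diff_right inner_commute power2_eq_square)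
  thus ?thesis by (metis norm_ge_zero real_sqrt_unique)
qed

locale gk = crv +
  fixes \<alpha> a P :: real and X Y f :: "real \<Rightarrow> real"
  assumes per: "\<And>s. D 0 (s + P) = D 0 s" and Ppos: "P > 0"
  and kpos: "\<And>s. kap s \<ge> 0"
  and al: "0 < \<alpha>" "\<alpha> < pi" and apos: "0 < a"
  and ne1: "\<And>\<tau>. D 0 (X \<tau>) \<noteq> D 0 (Y \<tau>)" and ne2: "\<And>\<tau>. D 0 (X \<tau>) \<noteq> - D 0 (Y \<tau>)"
  and ch1: "\<And>\<tau>. inner (D 1 (X \<tau>)) (geod_dir (D 0 (X \<tau>)) (D 0 (Y \<tau>))) = cos \<alpha>"
  and ch2: "\<And>\<tau>. inner (- geod_dir (D 0 (Y \<tau>)) (D 0 (X \<tau>))) (D 1 (Y \<tau>)) = cos \<alpha>"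
  and Xd: "\<And>\<tau>. (X has_real_derivative a / sqrt ((kap (X \<tau>))\<^sup>2 + (sin \<alpha>)\<^sup>2)) (at \<tau>)"
  and Yd: "\<And>\<tau>. (Y has_real_derivative a / sqrt ((kap (Y \<tau>))\<^sup>2 + (sin \<alpha>)\<^sup>2)) (at \<tau>)"
  and fr: "\<And>s. 0 < f s \<and> f s < pi"
  and fc: "\<And>s. cot (f s) = kap s / sin \<alpha>"
begin

definition "A \<tau> = inner (D 0 (X \<tau>)) (D 0 (Y \<tau>))"
definition "B \<tau> = sqrt (1 - (A \<tau>)\<^sup>2)"
definition "h \<tau> = inner (N (X \<tau>)) (D 0 (Y \<tau>))"
definition "h3 \<tau> = inner (N (Y \<tau>)) (D 0 (X \<tau>))"

lemma sa_pos: "sin \<alpha> > 0" using al sin_gt_zero by blast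

lemma A_bd: "-1 < A \<tau> \<and> A \<tau> < 1"
proof -
  let ?p = "D 0 (X \<tau>)" and ?q = "D 0 (Y \<tau>)"
  have pp: "inner ?p ?p = 1" "inner ?q ?q = 1" using i00 by auto
  have "\<bar>inner ?p ?q\<bar> \<le> 1" using Cauchy_Schwarz_ineq2[of ?p ?q] n0 by simp
  moreover have "inner ?p ?q \<noteq> 1"
  proof
    assume "inner ?p ?q = 1"
    hence "inner (?p - ?q) (?p - ?q) = 0" using pp by (simp add: inner_diff_left inner_diff_right inner_commute)
    thus False using ne1[of \<tau>] by simp
  qed
  moreover have "inner ?p ?q \<noteq> -1"
  proof
    assume "inner ?p ?q = -1"
    hence "inner (?p + ?q) (?p + ?q) = 0" using pp by (simp add: inner_add_left inner_add_right inner_commute)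
    hence "?p = - ?q" by (simp add: add_eq_0_iff)
    thus False using ne2[of \<tau>] by simp
  qed
  ultimately show ?thesis unfolding A_def by auto
qed

lemma B_pos: "B \<tau> > 0" unfolding B_def using A_bd[of \<tau>]
  by (simp add: abs_square_less_1 abs_less_iff)

lemma B_sq: "(B \<tau>)\<^sup>2 = 1 - (A \<tau>)\<^sup>2" unfolding B_def using A_bd[of \<tau>]
  by (simp add: abs_square_le_1 abs_le_iff)

lemma g2: "inner (D 1 (X \<tau>)) (D 0 (Y \<tau>)) = cos \<alpha> * B \<tau>"
proof -
  let ?p = "D 0 (X \<tau>)" and ?q = "D 0 (Y \<tau>)"
  have nb: "norm (?q - inner ?p ?q *\<^sub>R ?p) = B \<tau>" using norm_sub_proj n0 unfolding B_def A_def by blast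
  have "cos \<alpha> = inner (D 1 (X \<tau>)) ((1 / B \<tau>) *\<^sub>R (?q - inner ?p ?q *\<^sub>R ?p))"
    using ch1[of \<tau>] nb unfolding geod_dir_def by simp
  also have "\<dots> = inner (D 1 (X \<tau>)) ?q / B \<tau>"
    using i01s[of "X \<tau>"] by (simp add: inner_diff_right inner_commute)
  finally show ?thesis using B_pos[of \<tau>] by (simp add: field_simps)
qed

lemma g3: "inner (D 0 (X \<tau>)) (D 1 (Y \<tau>)) = - cos \<alpha> * B \<tau>"
proof -
  let ?p = "D 0 (X \<tau>)" and ?q = "D 0 (Y \<tau>)"
  have nb: "norm (?p - inner ?q ?p *\<^sub>R ?q) = B \<tau>" using norm_sub_proj n0 unfolding B_def A_def
    by (metis inner_commute)
  have "cos \<alpha> = - inner ((1 / B \<tau>) *\<^sub>R (?p - inner ?q ?p *\<^sub>R ?q)) (D 1 (Y \<tau>))"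
    using ch2[of \<tau>] nb unfolding geod_dir_def by simp
  also have "\<dots> = - inner ?p (D 1 (Y \<tau>)) / B \<tau>"
    using i01s[of "Y \<tau>"] by (simp add: inner_diff_left inner_diff_right inner_commute)
  finally show ?thesis using B_pos[of \<tau>] by (simp add: field_simps)
qed

lemma expand_q: "D 0 (Y \<tau>) = A \<tau> *\<^sub>R D 0 (X \<tau>) + (cos \<alpha> * B \<tau>) *\<^sub>R D 1 (X \<tau>) + h \<tau> *\<^sub>R N (X \<tau>)"
  using frame_expand[OF n0[of "X \<tau>"] n1[of "X \<tau>"] i01[of "X \<tau>"], of "D 0 (Y \<tau>)"] g2[of \<tau>]
  unfolding A_def h_def N_def by (simp add: inner_commute)

lemma expand_p: "D 0 (X \<tau>) = A \<tau> *\<^sub>R D 0 (Y \<tau>) + (- cos \<alpha> * B \<tau>) *\<^sub>R D 1 (Y \<tau>) + h3 \<tau> *\<^sub>R N (Y \<tau>)"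
  using frame_expand[OF n0[of "Y \<tau>"] n1[of "Y \<tau>"] i01[of "Y \<tau>"], of "D 0 (X \<tau>)"] g3[of \<tau>]
  unfolding A_def h3_def N_def by (simp add: inner_commute)

lemma parseval: fixes u v z :: "real^3"
  assumes "norm u = 1" "norm v = 1" "inner u v = 0"
  shows "inner z z = (inner z u)\<^sup>2 + (inner z v)\<^sup>2 + (inner z (u \<times> v))\<^sup>2"
proof -
  have "inner z z = inner z (inner z u *\<^sub>R u + inner z v *\<^sub>R v + inner z (u \<times> v) *\<^sub>R (u \<times> v))"
    using frame_expand[OF assms, of z] by simp
  thus ?thesis by (simp add: inner_add_right power2_eq_square)
qed

lemma hsq: "(h \<tau>)\<^sup>2 = (sin \<alpha>)\<^sup>2 * (B \<tau>)\<^sup>2"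
proof -
  have "inner (D 0 (Y \<tau>)) (D 0 (Y \<tau>)) = (A \<tau>)\<^sup>2 + (cos \<alpha> * B \<tau>)\<^sup>2 + (h \<tau>)\<^sup>2"
    using parseval[OF n0[of "X \<tau>"] n1[of "X \<tau>"] i01[of "X \<tau>"], of "D 0 (Y \<tau>)"] g2[of \<tau>]
    unfolding A_def h_def N_def by (simp add: inner_commute)
  thus ?thesis using i00
    by (simp add: power_mult_distrib sin_squared_eq B_sq algebra_simps)
qed

lemma h3sq: "(h3 \<tau>)\<^sup>2 = (sin \<alpha>)\<^sup>2 * (B \<tau>)\<^sup>2"
proof -
  have "inner (D 0 (X \<tau>)) (D 0 (X \<tau>)) = (A \<tau>)\<^sup>2 + (cos \<alpha> * B \<tau>)\<^sup>2 + (h3 \<tau>)\<^sup>2"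
    using parseval[OF n0[of "Y \<tau>"] n1[of "Y \<tau>"] i01[of "Y \<tau>"], of "D 0 (X \<tau>)"] g3[of \<tau>]
    unfolding A_def h3_def N_def by (simp add: inner_commute power_mult_distrib)
  thus ?thesis using i00
    by (simp add: power_mult_distrib sin_squared_eq B_sq algebra_simps)
qed

lemma h_ne: "h \<tau> \<noteq> 0" using hsq[of \<tau>] B_pos[of \<tau>] sa_pos by auto
lemma h3_ne: "h3 \<tau> \<noteq> 0" using h3sq[of \<tau>] B_pos[of \<tau>] sa_pos by auto

lemma h3_eq: "h3 \<tau> = cos \<alpha> * B \<tau> * inner (N (X \<tau>)) (D 1 (Y \<tau>)) - h \<tau> * inner (D 1 (X \<tau>)) (D 1 (Y \<tau>))"
proof -
  let ?p = "D 0 (X \<tau>)" and ?q = "D 0 (Y \<tau>)" and ?T = "D 1 (X \<tau>)" and ?U = "D 1 (Y \<tau>)"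
  have "h3 \<tau> = inner ?U (?p \<times> ?q)" unfolding h3_def N_def by (rule triple_cyc)
  also have "?p \<times> ?q = (cos \<alpha> * B \<tau>) *\<^sub>R N (X \<tau>) - h \<tau> *\<^sub>R ?T"
  proof -
    have "?p \<times> ?q = ?p \<times> (A \<tau> *\<^sub>R ?p + (cos \<alpha> * B \<tau>) *\<^sub>R ?T + h \<tau> *\<^sub>R N (X \<tau>))"
      using expand_q by metis
    also have "\<dots> = (cos \<alpha> * B \<tau>) *\<^sub>R (?p \<times> ?T) + h \<tau> *\<^sub>R (?p \<times> (?p \<times> ?T))"
      unfolding N_def by (simp add: cross_add_right cross_mult_right)
    finally show ?thesis using i00[of "X \<tau>"] i01[of "X \<tau>"] unfolding N_def
      by (simp add: cross_cross_self)
  qed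
  finally show ?thesis by (simp add: inner_diff_right inner_commute)
qed

end


context gk begin

definition "vx \<tau> = a / sqrt ((kap (X \<tau>))\<^sup>2 + (sin \<alpha>)\<^sup>2)"
definition "vy \<tau> = a / sqrt ((kap (Y \<tau>))\<^sup>2 + (sin \<alpha>)\<^sup>2)"
definition "PP \<tau> = inner (D 1 (X \<tau>)) (D 1 (Y \<tau>))"
definition "QQ \<tau> = inner (N (X \<tau>)) (D 1 (Y \<tau>))"

lemma Xd': "(X has_real_derivative vx \<tau>) (at \<tau>)" unfolding vx_def by (rule Xd)
lemma Yd': "(Y has_real_derivative vy \<tau>) (at \<tau>)" unfolding vy_def by (rule Yd)

lemma dDX: "((\<lambda>\<tau>. D k (X \<tau>)) has_vector_derivative vx \<tau> *\<^sub>R D (Suc k) (X \<tau>)) (at \<tau>)"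
  by (rule vd_chain[OF Xd' Dd])
lemma dDY: "((\<lambda>\<tau>. D k (Y \<tau>)) has_vector_derivative vy \<tau> *\<^sub>R D (Suc k) (Y \<tau>)) (at \<tau>)"
  by (rule vd_chain[OF Yd' Dd])
lemma dNX: "((\<lambda>\<tau>. N (X \<tau>)) has_vector_derivative vx \<tau> *\<^sub>R (- kap (X \<tau>) *\<^sub>R D 1 (X \<tau>))) (at \<tau>)"
  by (rule vd_chain[OF Xd' N_deriv])

definition "Ad \<tau> = cos \<alpha> * B \<tau> * (vx \<tau> - vy \<tau>)"

lemma dA: "(A has_real_derivative Ad \<tau>) (at \<tau>)"
proof -
  have "((\<lambda>\<tau>. inner (D 0 (X \<tau>)) (D 0 (Y \<tau>))) has_real_derivative
     (inner (vx \<tau> *\<^sub>R D 1 (X \<tau>)) (D 0 (Y \<tau>)) + inner (D 0 (X \<tau>)) (vy \<tau> *\<^sub>R D 1 (Y \<tau>)))) (at \<tau>)"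
    using vd_inner[OF dDX dDY] by simp
  moreover have "inner (vx \<tau> *\<^sub>R D 1 (X \<tau>)) (D 0 (Y \<tau>)) + inner (D 0 (X \<tau>)) (vy \<tau> *\<^sub>R D 1 (Y \<tau>)) = Ad \<tau>"
    using g2[of \<tau>] g3[of \<tau>] unfolding Ad_def by (simp add: algebra_simps)
  ultimately show ?thesis unfolding A_def[abs_def] by simp
qed

lemma dB: "(B has_real_derivative (- A \<tau> * cos \<alpha> * (vx \<tau> - vy \<tau>))) (at \<tau>)"
proof -
  have pos: "1 - (A \<tau>)\<^sup>2 > 0" using B_pos[of \<tau>] unfolding B_def by simp
  have H1: "((\<lambda>\<tau>. sqrt (1 - (A \<tau>)\<^sup>2)) has_real_derivative
     (inverse (sqrt (1 - (A \<tau>)\<^sup>2)) / 2 * (- (2 * A \<tau> * Ad \<tau>)))) (at \<tau>)"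
    using pos by (auto intro!: derivative_eq_intros dA simp: power2_eq_square)
  moreover have H2: "inverse (sqrt (1 - (A \<tau>)\<^sup>2)) / 2 * (- (2 * A \<tau> * Ad \<tau>)) = - A \<tau> * cos \<alpha> * (vx \<tau> - vy \<tau>)"
  proof -
    have e: "sqrt (1 - (A \<tau>)\<^sup>2) = B \<tau>" by (simp add: B_def)
    show ?thesis unfolding e Ad_def using B_pos[of \<tau>] by (simp add: field_simps)
  qed
  show ?thesis using H1[unfolded H2] unfolding B_def[abs_def] .
qed

lemma D2_eq': "D (Suc (Suc 0)) s = - D 0 s + kap s *\<^sub>R N s"
  using D2_eq[of s] by (simp add: numeral_2_eq_2)

lemma dconst_eq:
  assumes "\<And>\<tau>. F \<tau> = G \<tau>" "(F has_real_derivative d1) (at \<tau>)" "(G has_real_derivative d2) (at \<tau>)"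
  shows "d1 = d2"
proof -
  have "F = G" using assms(1) by auto
  thus ?thesis using assms(2,3) DERIV_unique by metis
qed

lemma eqi: "vx \<tau> * (- A \<tau> + kap (X \<tau>) * h \<tau>) + vy \<tau> * PP \<tau> = cos \<alpha> * (- A \<tau> * cos \<alpha> * (vx \<tau> - vy \<tau>))"
proof -
  have d1: "((\<lambda>\<tau>. inner (D (Suc 0) (X \<tau>)) (D 0 (Y \<tau>))) has_real_derivative
     (inner (vx \<tau> *\<^sub>R D (Suc (Suc 0)) (X \<tau>)) (D 0 (Y \<tau>)) + inner (D (Suc 0) (X \<tau>)) (vy \<tau> *\<^sub>R D (Suc 0) (Y \<tau>)))) (at \<tau>)"
    by (rule vd_inner[OF dDX dDY])
  have d2: "((\<lambda>\<tau>. cos \<alpha> * B \<tau>) has_real_derivative cos \<alpha> * (- A \<tau> * cos \<alpha> * (vx \<tau> - vy \<tau>))) (at \<tau>)"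
    by (auto intro!: derivative_eq_intros dB)
  have "inner (vx \<tau> *\<^sub>R D (Suc (Suc 0)) (X \<tau>)) (D 0 (Y \<tau>)) + inner (D (Suc 0) (X \<tau>)) (vy \<tau> *\<^sub>R D (Suc 0) (Y \<tau>))
     = cos \<alpha> * (- A \<tau> * cos \<alpha> * (vx \<tau> - vy \<tau>))"
    by (rule dconst_eq[OF _ d1 d2]) (use g2 in simp)
  thus ?thesis unfolding D2_eq' A_def h_def PP_def
    by (simp add: inner_add_left inner_diff_left algebra_simps)
qed

lemma eqii: "h \<tau> * (- vx \<tau> * kap (X \<tau>) * (cos \<alpha> * B \<tau>) + vy \<tau> * QQ \<tau>) = (sin \<alpha>)\<^sup>2 * (B \<tau> * (- A \<tau> * cos \<alpha> * (vx \<tau> - vy \<tau>)))"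
proof -
  have dh: "(h has_real_derivative (- vx \<tau> * kap (X \<tau>) * (cos \<alpha> * B \<tau>) + vy \<tau> * QQ \<tau>)) (at \<tau>)"
  proof -
    have "((\<lambda>\<tau>. inner (N (X \<tau>)) (D 0 (Y \<tau>))) has_real_derivative
     (inner (vx \<tau> *\<^sub>R (- kap (X \<tau>) *\<^sub>R D 1 (X \<tau>))) (D 0 (Y \<tau>)) + inner (N (X \<tau>)) (vy \<tau> *\<^sub>R D (Suc 0) (Y \<tau>)))) (at \<tau>)"
      by (rule vd_inner[OF dNX dDY])
    moreover have "inner (vx \<tau> *\<^sub>R (- kap (X \<tau>) *\<^sub>R D 1 (X \<tau>))) (D 0 (Y \<tau>)) + inner (N (X \<tau>)) (vy \<tau> *\<^sub>R D (Suc 0) (Y \<tau>))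
       = - vx \<tau> * kap (X \<tau>) * (cos \<alpha> * B \<tau>) + vy \<tau> * QQ \<tau>"
      using g2[of \<tau>] unfolding QQ_def by simp
    ultimately show ?thesis unfolding h_def[abs_def] by simp
  qed
  have d1: "((\<lambda>\<tau>. (h \<tau>)\<^sup>2) has_real_derivative (2 * h \<tau> * (- vx \<tau> * kap (X \<tau>) * (cos \<alpha> * B \<tau>) + vy \<tau> * QQ \<tau>))) (at \<tau>)"
    by (auto intro!: derivative_eq_intros dh)
  have d2: "((\<lambda>\<tau>. (sin \<alpha>)\<^sup>2 * (B \<tau>)\<^sup>2) has_real_derivative ((sin \<alpha>)\<^sup>2 * (2 * B \<tau> * (- A \<tau> * cos \<alpha> * (vx \<tau> - vy \<tau>))))) (at \<tau>)"
    by (auto intro!: derivative_eq_intros dB)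
  have "2 * h \<tau> * (- vx \<tau> * kap (X \<tau>) * (cos \<alpha> * B \<tau>) + vy \<tau> * QQ \<tau>) = (sin \<alpha>)\<^sup>2 * (2 * B \<tau> * (- A \<tau> * cos \<alpha> * (vx \<tau> - vy \<tau>)))"
    by (rule dconst_eq[OF hsq d1 d2])
  thus ?thesis by (simp add: algebra_simps)
qed

lemma eqiii: "vx \<tau> * PP \<tau> + vy \<tau> * (- A \<tau> + kap (Y \<tau>) * h3 \<tau>) = - cos \<alpha> * (- A \<tau> * cos \<alpha> * (vx \<tau> - vy \<tau>))"
proof -
  have d1: "((\<lambda>\<tau>. inner (D 0 (X \<tau>)) (D (Suc 0) (Y \<tau>))) has_real_derivative
     (inner (vx \<tau> *\<^sub>R D (Suc 0) (X \<tau>)) (D (Suc 0) (Y \<tau>)) + inner (D 0 (X \<tau>)) (vy \<tau> *\<^sub>R D (Suc (Suc 0)) (Y \<tau>)))) (at \<tau>)"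
    by (rule vd_inner[OF dDX dDY])
  have d2: "((\<lambda>\<tau>. - cos \<alpha> * B \<tau>) has_real_derivative - cos \<alpha> * (- A \<tau> * cos \<alpha> * (vx \<tau> - vy \<tau>))) (at \<tau>)"
    by (auto intro!: derivative_eq_intros dB)
  have "inner (vx \<tau> *\<^sub>R D (Suc 0) (X \<tau>)) (D (Suc 0) (Y \<tau>)) + inner (D 0 (X \<tau>)) (vy \<tau> *\<^sub>R D (Suc (Suc 0)) (Y \<tau>))
     = - cos \<alpha> * (- A \<tau> * cos \<alpha> * (vx \<tau> - vy \<tau>))"
    by (rule dconst_eq[OF _ d1 d2]) (use g3 in simp)
  thus ?thesis unfolding D2_eq' A_def h3_def PP_def
    by (simp add: inner_add_right inner_diff_right inner_commute algebra_simps)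
qed

end


lemma alg1:
  fixes vx vy A B c s kx h h3 P Q :: real
  assumes Ei: "vx * (- A + kx * h) + vy * P = c * (- A * c * (vx - vy))"
    and Eii: "h * (- vx * kx * (c * B) + vy * Q) = s\<^sup>2 * (B * (- A * c * (vx - vy)))"
    and H3: "h3 = c * B * Q - h * P"
    and HS: "h\<^sup>2 = s\<^sup>2 * B\<^sup>2" and CS: "c\<^sup>2 + s\<^sup>2 = 1"
  shows "vy * h3 * h = B\<^sup>2 * vx * (kx * h - s\<^sup>2 * A)"
  using assms by algebra

lemma alg2:
  fixes vx vy A c kx ky h h3 P :: real
  assumes Ei: "vx * (- A + kx * h) + vy * P = c * (- A * c * (vx - vy))"
    and Eiii: "vx * P + vy * (- A + ky * h3) = - c * (- A * c * (vx - vy))"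
    and CS: "c\<^sup>2 + s\<^sup>2 = 1"
  shows "vy\<^sup>2 * ky * h3 = s\<^sup>2 * A * (vy\<^sup>2 - vx\<^sup>2) + vx\<^sup>2 * kx * h"
  using assms by algebra

lemma alg3:
  fixes S1 C1 S2 C2 A B s e e' h h3 :: real
  assumes "S1\<^sup>2 + C1\<^sup>2 = 1" "A\<^sup>2 + B\<^sup>2 = 1" "S2 > 0" "B > 0" "s > 0" "e\<^sup>2 = 1" "e'\<^sup>2 = 1"
    and E1: "S2 * h3 * h = s * B\<^sup>2 * (C1 * h - s * S1 * A)"
    and E2: "S2 * C2 * h3 = s * A * (S2\<^sup>2 - S1\<^sup>2) + S1 * C1 * h"
    and hh: "h = e * s * B" and hh3: "h3 = - e' * s * B"
  shows "e' * S2 = e * S1 * A - C1 * B \<and> C2 = C1 * A + e * S1 * B"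
proof -
  have "(s * B)\<^sup>2 * (- e * e' * S2 - (e * C1 * B - S1 * A)) = 0"
    using E1 unfolding hh hh3 by algebra
  hence "- e * e' * S2 - (e * C1 * B - S1 * A) = 0" using assms by simp
  hence 1: "- e * e' * S2 = e * C1 * B - S1 * A" by linarith
  have R1: "e' * S2 = e * S1 * A - C1 * B"
  proof -
    have "e * (- e * e' * S2) = e * (e * C1 * B - S1 * A)" using 1 by simp
    thus ?thesis using assms(6) by algebra
  qed
  have "s * (- e' * B * S2 * C2 - (A * (S2\<^sup>2 - S1\<^sup>2) + e * B * S1 * C1)) = 0"
    using E2 unfolding hh hh3 by algebra
  hence "- e' * B * S2 * C2 - (A * (S2\<^sup>2 - S1\<^sup>2) + e * B * S1 * C1) = 0" using assms by simp
  hence 2: "- e' * B * S2 * C2 = A * (S2\<^sup>2 - S1\<^sup>2) + e * B * S1 * C1" by linarith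
  have "(e' * S2 * B) * C2 = (e' * S2 * B) * (C1 * A + e * S1 * B)"
    using 2 R1 assms(1,2,6,7) by algebra
  moreover have "e' \<noteq> 0" using assms(7) by auto
  hence "e' * S2 * B \<noteq> 0" using assms by auto
  ultimately have "C2 = C1 * A + e * S1 * B" by simp
  thus ?thesis using R1 by simp
qed



context gk begin

definition "rr s = sqrt ((kap s)\<^sup>2 + (sin \<alpha>)\<^sup>2)"

lemma rr_pos: "rr s > 0" unfolding rr_def using sa_pos by (simp add: add_nonneg_pos)
lemma rr_sq: "(rr s)\<^sup>2 = (kap s)\<^sup>2 + (sin \<alpha>)\<^sup>2" unfolding rr_def by simp

lemma fsin_pos: "sin (f s) > 0" using fr[of s] sin_gt_zero by blast

lemma fsin: "sin (f s) = sin \<alpha> / rr s" and fcos: "cos (f s) = kap s / rr s"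
proof -
  have sp: "sin (f s) > 0" by (rule fsin_pos)
  have c: "cos (f s) = kap s * sin (f s) / sin \<alpha>"
    using fc[of s] sp sa_pos unfolding cot_def by (simp add: field_simps)
  have H: "(sin (f s))\<^sup>2 + (kap s * sin (f s) / sin \<alpha>)\<^sup>2 = 1"
    using sin_cos_squared_add[of "f s"] c by simp
  have "(sin \<alpha>)\<^sup>2 * ((sin (f s))\<^sup>2 + (kap s * sin (f s) / sin \<alpha>)\<^sup>2) = (sin (f s))\<^sup>2 * ((sin \<alpha>)\<^sup>2 + (kap s)\<^sup>2)"
    using sa_pos by (simp add: power_divide power_mult_distrib field_simps)
  hence "(sin (f s))\<^sup>2 * ((sin \<alpha>)\<^sup>2 + (kap s)\<^sup>2) = (sin \<alpha>)\<^sup>2" using H by simp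
  hence "(sin (f s) * rr s)\<^sup>2 = (sin \<alpha>)\<^sup>2" using rr_sq[of s] by (simp add: power_mult_distrib algebra_simps)
  hence "sin (f s) * rr s = sin \<alpha>" using power2_eq_iff_nonneg[of "sin (f s) * rr s" "sin \<alpha>"] sp rr_pos[of s] sa_pos
    by simp
  thus s1: "sin (f s) = sin \<alpha> / rr s" using rr_pos[of s] by (simp add: field_simps)
  show "cos (f s) = kap s / rr s" unfolding c s1 using sa_pos by simp
qed

lemma fcos_nn: "cos (f s) \<ge> 0" unfolding fcos by (rule divide_nonneg_pos[OF kpos rr_pos])

lemma vxs: "vx \<tau> * sin \<alpha> = a * sin (f (X \<tau>))" "vx \<tau> * kap (X \<tau>) = a * cos (f (X \<tau>))"
  unfolding vx_def fsin fcos rr_def by simp_all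
lemma vys: "vy \<tau> * sin \<alpha> = a * sin (f (Y \<tau>))" "vy \<tau> * kap (Y \<tau>) = a * cos (f (Y \<tau>))"
  unfolding vy_def fsin fcos rr_def by simp_all

lemma cs1: "(cos \<alpha>)\<^sup>2 + (sin \<alpha>)\<^sup>2 = 1" by simp

lemma eq1: "sin (f (Y \<tau>)) * h3 \<tau> * h \<tau> = sin \<alpha> * (B \<tau>)\<^sup>2 * (cos (f (X \<tau>)) * h \<tau> - sin \<alpha> * sin (f (X \<tau>)) * A \<tau>)"
proof -
  have e: "vy \<tau> * h3 \<tau> * h \<tau> = (B \<tau>)\<^sup>2 * vx \<tau> * (kap (X \<tau>) * h \<tau> - (sin \<alpha>)\<^sup>2 * A \<tau>)"
    by (rule alg1[OF eqi eqii h3_eq[folded QQ_def PP_def] hsq cs1])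
  have "a * (sin (f (Y \<tau>)) * h3 \<tau> * h \<tau>) = (vy \<tau> * sin \<alpha>) * h3 \<tau> * h \<tau>" using vys[of \<tau>] by simp
  also have "\<dots> = sin \<alpha> * (vy \<tau> * h3 \<tau> * h \<tau>)" by (simp add: algebra_simps)
  also have "\<dots> = sin \<alpha> * (B \<tau>)\<^sup>2 * ((vx \<tau> * kap (X \<tau>)) * h \<tau> - sin \<alpha> * (vx \<tau> * sin \<alpha>) * A \<tau>)"
    unfolding e by (simp add: algebra_simps power2_eq_square)
  also have "\<dots> = a * (sin \<alpha> * (B \<tau>)\<^sup>2 * (cos (f (X \<tau>)) * h \<tau> - sin \<alpha> * sin (f (X \<tau>)) * A \<tau>))"
    unfolding vxs by (simp add: algebra_simps)
  finally have "a * (sin (f (Y \<tau>)) * h3 \<tau> * h \<tau>) = a * (sin \<alpha> * (B \<tau>)\<^sup>2 * (cos (f (X \<tau>)) * h \<tau> - sin \<alpha> * sin (f (X \<tau>)) * A \<tau>))" .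
  thus ?thesis using apos by simp
qed

lemma eq2: "sin (f (Y \<tau>)) * cos (f (Y \<tau>)) * h3 \<tau> = sin \<alpha> * A \<tau> * ((sin (f (Y \<tau>)))\<^sup>2 - (sin (f (X \<tau>)))\<^sup>2) + sin (f (X \<tau>)) * cos (f (X \<tau>)) * h \<tau>"
proof -
  have e: "(vy \<tau>)\<^sup>2 * kap (Y \<tau>) * h3 \<tau> = (sin \<alpha>)\<^sup>2 * A \<tau> * ((vy \<tau>)\<^sup>2 - (vx \<tau>)\<^sup>2) + (vx \<tau>)\<^sup>2 * kap (X \<tau>) * h \<tau>"
    by (rule alg2[OF eqi eqiii cs1])
  have "a\<^sup>2 * sin \<alpha> * (sin (f (Y \<tau>)) * cos (f (Y \<tau>)) * h3 \<tau>) = (vy \<tau> * sin \<alpha>) * (vy \<tau> * kap (Y \<tau>)) * sin \<alpha> * h3 \<tau>"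
    unfolding vys by (simp add: algebra_simps power2_eq_square)
  also have "\<dots> = (sin \<alpha>)\<^sup>2 * ((vy \<tau>)\<^sup>2 * kap (Y \<tau>) * h3 \<tau>)" by (simp add: algebra_simps power2_eq_square)
  also have "\<dots> = (sin \<alpha>)\<^sup>2 * ((sin \<alpha>)\<^sup>2 * A \<tau> * ((vy \<tau>)\<^sup>2 - (vx \<tau>)\<^sup>2)) + sin \<alpha> * (vx \<tau> * sin \<alpha>) * (vx \<tau> * kap (X \<tau>)) * h \<tau>"
    unfolding e by (simp add: algebra_simps power2_eq_square)
  also have "\<dots> = sin \<alpha> * A \<tau> * ((vy \<tau> * sin \<alpha>)\<^sup>2 - (vx \<tau> * sin \<alpha>)\<^sup>2) * sin \<alpha> + sin \<alpha> * (vx \<tau> * sin \<alpha>) * (vx \<tau> * kap (X \<tau>)) * h \<tau>"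
    by (simp add: algebra_simps power2_eq_square)
  also have "\<dots> = a\<^sup>2 * sin \<alpha> * (sin \<alpha> * A \<tau> * ((sin (f (Y \<tau>)))\<^sup>2 - (sin (f (X \<tau>)))\<^sup>2) + sin (f (X \<tau>)) * cos (f (X \<tau>)) * h \<tau>)"
    unfolding vxs vys by (simp add: algebra_simps power2_eq_square)
  finally have "a\<^sup>2 * sin \<alpha> * (sin (f (Y \<tau>)) * cos (f (Y \<tau>)) * h3 \<tau>) = a\<^sup>2 * sin \<alpha> * (sin \<alpha> * A \<tau> * ((sin (f (Y \<tau>)))\<^sup>2 - (sin (f (X \<tau>)))\<^sup>2) + sin (f (X \<tau>)) * cos (f (X \<tau>)) * h \<tau>)" .
  thus ?thesis using apos sa_pos by simp
qed

lemma key: "\<exists>e e'. e\<^sup>2 = 1 \<and> e'\<^sup>2 = 1 \<and> h \<tau> = e * sin \<alpha> * B \<tau> \<and> h3 \<tau> = - e' * sin \<alpha> * B \<tau>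
   \<and> e' * sin (f (Y \<tau>)) = e * sin (f (X \<tau>)) * A \<tau> - cos (f (X \<tau>)) * B \<tau>
   \<and> cos (f (Y \<tau>)) = cos (f (X \<tau>)) * A \<tau> + e * sin (f (X \<tau>)) * B \<tau>"
proof -
  have "(h \<tau>)\<^sup>2 = (sin \<alpha> * B \<tau>)\<^sup>2" using hsq[of \<tau>] by (simp add: power_mult_distrib)
  hence "h \<tau> = sin \<alpha> * B \<tau> \<or> h \<tau> = - (sin \<alpha> * B \<tau>)"
    using power2_eq_iff by blast
  then obtain e where e: "e\<^sup>2 = 1" "h \<tau> = e * sin \<alpha> * B \<tau>"
  proof (elim disjE)
    assume "h \<tau> = sin \<alpha> * B \<tau>" then show thesis using that[of 1] by simp
  next
    assume "h \<tau> = - (sin \<alpha> * B \<tau>)" then show thesis using that[of "-1"] by simp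
  qed
  have "(h3 \<tau>)\<^sup>2 = (sin \<alpha> * B \<tau>)\<^sup>2" using h3sq[of \<tau>] by (simp add: power_mult_distrib)
  hence "h3 \<tau> = sin \<alpha> * B \<tau> \<or> h3 \<tau> = - (sin \<alpha> * B \<tau>)"
    using power2_eq_iff by blast
  then obtain e' where e': "e'\<^sup>2 = 1" "h3 \<tau> = - e' * sin \<alpha> * B \<tau>"
  proof (elim disjE)
    assume "h3 \<tau> = sin \<alpha> * B \<tau>" then show thesis using that[of "-1"] by simp
  next
    assume "h3 \<tau> = - (sin \<alpha> * B \<tau>)" then show thesis using that[of 1] by simp
  qed
  have AB: "(A \<tau>)\<^sup>2 + (B \<tau>)\<^sup>2 = 1" using B_sq by simp
  have "e' * sin (f (Y \<tau>)) = e * sin (f (X \<tau>)) * A \<tau> - cos (f (X \<tau>)) * B \<tau>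
     \<and> cos (f (Y \<tau>)) = cos (f (X \<tau>)) * A \<tau> + e * sin (f (X \<tau>)) * B \<tau>"
    by (rule alg3[OF _ AB fsin_pos B_pos sa_pos e(1) e'(1) eq1 eq2 e(2) e'(2)]) simp
  thus ?thesis using e e' by blast
qed

lemma F1: assumes "h \<tau> < 0" shows "cos (f (Y \<tau>)) = cos (f (X \<tau>)) * A \<tau> - sin (f (X \<tau>)) * B \<tau>"
proof -
  obtain e e' where k: "e\<^sup>2 = 1" "h \<tau> = e * sin \<alpha> * B \<tau>"
    "cos (f (Y \<tau>)) = cos (f (X \<tau>)) * A \<tau> + e * sin (f (X \<tau>)) * B \<tau>" using key by blast
  have sb: "sin \<alpha> * B \<tau> > 0" using sa_pos B_pos[of \<tau>] by simp
  have "e * (sin \<alpha> * B \<tau>) < 0" using k(2) assms by (simp add: mult.assoc)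
  hence "e < 0" using sb sa_pos B_pos[of \<tau>] by (auto simp: mult_less_0_iff)
  hence "e = -1" using k(1) by (auto simp: power2_eq_1_iff)
  thus ?thesis using k(3) by simp
qed

lemma F2: assumes "h3 \<tau> < 0" shows "cos (f (X \<tau>)) = cos (f (Y \<tau>)) * A \<tau> - sin (f (Y \<tau>)) * B \<tau>"
proof -
  obtain e e' where k: "e\<^sup>2 = 1" "e'\<^sup>2 = 1" "h3 \<tau> = - e' * sin \<alpha> * B \<tau>"
    "e' * sin (f (Y \<tau>)) = e * sin (f (X \<tau>)) * A \<tau> - cos (f (X \<tau>)) * B \<tau>"
    "cos (f (Y \<tau>)) = cos (f (X \<tau>)) * A \<tau> + e * sin (f (X \<tau>)) * B \<tau>" using key by blast
  have sb: "sin \<alpha> * B \<tau> > 0" using sa_pos B_pos[of \<tau>] by simp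
  have "e' * (sin \<alpha> * B \<tau>) > 0" using k(3) assms by (simp add: mult.assoc)
  hence "e' > 0" using sb by (simp add: zero_less_mult_iff)
  hence "e' = 1" using k(2) by (auto simp: power2_eq_1_iff)
  hence s2: "sin (f (Y \<tau>)) = e * sin (f (X \<tau>)) * A \<tau> - cos (f (X \<tau>)) * B \<tau>" using k(4) by simp
  have AB: "(A \<tau>)\<^sup>2 + (B \<tau>)\<^sup>2 = 1" using B_sq by simp
  show ?thesis unfolding k(5) s2 using AB k(1) by algebra
qed

lemma F3: assumes "h \<tau> > 0" "h3 \<tau> > 0"
  shows "sin (f (Y \<tau>)) = cos (f (X \<tau>)) * B \<tau> - sin (f (X \<tau>)) * A \<tau>
    \<and> cos (f (Y \<tau>)) = cos (f (X \<tau>)) * A \<tau> + sin (f (X \<tau>)) * B \<tau>"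
proof -
  obtain e e' where k: "e\<^sup>2 = 1" "e'\<^sup>2 = 1" "h \<tau> = e * sin \<alpha> * B \<tau>" "h3 \<tau> = - e' * sin \<alpha> * B \<tau>"
    "e' * sin (f (Y \<tau>)) = e * sin (f (X \<tau>)) * A \<tau> - cos (f (X \<tau>)) * B \<tau>"
    "cos (f (Y \<tau>)) = cos (f (X \<tau>)) * A \<tau> + e * sin (f (X \<tau>)) * B \<tau>" using key by blast
  have sb: "sin \<alpha> * B \<tau> > 0" using sa_pos B_pos[of \<tau>] by simp
  have "e * (sin \<alpha> * B \<tau>) > 0" using k(3) assms by (simp add: mult.assoc)
  hence "e > 0" using sb by (simp add: zero_less_mult_iff)
  hence e1: "e = 1" using k(1) by (auto simp: power2_eq_1_iff)
  have "e' * (sin \<alpha> * B \<tau>) < 0" using k(4) assms by (simp add: mult.assoc)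
  hence "e' < 0" using sb sa_pos B_pos[of \<tau>] by (auto simp: mult_less_0_iff)
  hence e2: "e' = -1" using k(2) by (auto simp: power2_eq_1_iff)
  show ?thesis using k(5,6) unfolding e1 e2 by simp
qed

end


lemma sign_const:
  fixes g :: "real \<Rightarrow> real"
  assumes "\<And>x. isCont g x" "\<And>x. g x \<noteq> 0" "g a > 0" shows "g b > 0"
proof (rule ccontr)
  assume "\<not> g b > 0"
  hence gb: "g b \<le> 0" by simp
  have co: "\<And>u v. continuous_on {u..v} g" using assms(1) by (simp add: continuous_at_imp_continuous_on)
  consider "a \<le> b" | "b \<le> a" by linarith
  then show False
  proof cases
    case 1
    then obtain x where "g x = 0" using IVT2'[of g b 0 a, OF gb _ 1 co] assms(3) by auto
    thus False using assms(2) by blast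
  next
    case 2
    then obtain x where "g x = 0" using IVT'[of g b 0 a, OF gb _ 2 co] assms(3) by auto
    thus False using assms(2) by blast
  qed
qed

lemma surj_deriv:
  fixes F F' :: "real \<Rightarrow> real"
  assumes d: "\<And>\<tau>. (F has_real_derivative F' \<tau>) (at \<tau>)" and b: "\<And>\<tau>. F' \<tau> \<ge> m" and m: "m > 0"
  shows "\<exists>\<tau>. F \<tau> = z"
proof -
  have co: "\<And>u v. continuous_on {u..v} F" using d DERIV_isCont by (blast intro: continuous_at_imp_continuous_on)
  have mono: "F u + m * (v - u) \<le> F v" if "u \<le> v" for u v
  proof -
    have "(\<lambda>\<tau>. F \<tau> - m * \<tau>) u \<le> (\<lambda>\<tau>. F \<tau> - m * \<tau>) v"
    proof (rule DERIV_nonneg_imp_nondecreasing[OF that])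
      fix x show "\<exists>y. ((\<lambda>\<tau>. F \<tau> - m * \<tau>) has_real_derivative y) (at x) \<and> y \<ge> 0"
        using b[of x] by (intro exI[of _ "F' x - m"]) (auto intro!: derivative_eq_intros d)
    qed
    thus ?thesis by (simp add: algebra_simps)
  qed
  show ?thesis
  proof (cases "z \<ge> F 0")
    case True
    define T where "T = (z - F 0) / m"
    have T: "T \<ge> 0" using True m unfolding T_def by simp
    have "F T \<ge> z" using mono[OF T] m unfolding T_def by simp
    thus ?thesis using IVT'[of F 0 z T, OF True _ T co] by auto
  next
    case False
    define T where "T = (z - F 0) / m"
    have T: "T \<le> 0" using False m unfolding T_def by (simp add: divide_nonpos_pos)
    have "F T \<le> z" using mono[OF T] m unfolding T_def by simp
    thus ?thesis using IVT'[of F T z 0, OF _ _ T co] False by auto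
  qed
qed

context gk begin

lemma Dper: "D k (s + P) = D k s"
proof (induction k arbitrary: s)
  case 0 thus ?case by (rule per)
next
  case (Suc k)
  have sh: "((\<lambda>s. s + P) has_real_derivative 1) (at s)" by (auto intro!: derivative_eq_intros)
  have "((\<lambda>s. D k (s + P)) has_vector_derivative 1 *\<^sub>R D (Suc k) (s + P)) (at s)"
    by (rule vd_chain[OF sh Dd])
  moreover have "(\<lambda>s. D k (s + P)) = D k" using Suc by auto
  ultimately have "(D k has_vector_derivative D (Suc k) (s + P)) (at s)" by simp
  thus ?case using Dd vector_derivative_unique_at by blast
qed

lemma kap_per: "kap (s + P) = kap s" unfolding kap_def N_def Dper ..

lemma kap_per_nat: "kap (r + real m * P) = kap r"
proof (induction m)
  case 0 thus ?case by simp
next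
  case (Suc m)
  have "r + real (Suc m) * P = (r + real m * P) + P" by (simp add: algebra_simps)
  thus ?case using kap_per[of "r + real m * P"] Suc by (simp only:)
qed

lemma kap_red: "\<exists>r\<in>{0..P}. kap s = kap r"
proof -
  define n where "n = \<lfloor>s / P\<rfloor>"
  define r where "r = s - real_of_int n * P"
  have r0: "r \<ge> 0" unfolding r_def n_def using floor_divide_lower[OF Ppos, of s] by simp
  have r1: "r \<le> P" unfolding r_def n_def using floor_divide_upper[OF Ppos, of s] by (simp add: algebra_simps)
  have "kap s = kap r"
  proof (cases "n \<ge> 0")
    case True
    then obtain m where "n = int m" using nonneg_int_cases by blast
    hence "s = r + real m * P" unfolding r_def by simp
    thus ?thesis using kap_per_nat by simp
  next
    case False
    have "n = - int (nat (- n))" using False by simp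
    then obtain m where m: "n = - int m" by blast
    hence "r = s + real m * P" unfolding r_def by simp
    thus ?thesis using kap_per_nat by simp
  qed
  thus ?thesis using r0 r1 by auto
qed

lemma cD: "isCont (D k) s" using Dd has_vector_derivative_continuous by blast
lemma cN: "isCont N s" unfolding N_def[abs_def] by (intro continuous_cross cD)
lemma ckap: "isCont kap s" unfolding kap_def[abs_def] by (intro continuous_intros cN cD)
lemma cX: "isCont X s" using Xd DERIV_isCont by blast
lemma cY: "isCont Y s" using Yd DERIV_isCont by blast

lemma kap_min: "\<exists>s0. \<forall>s. kap s0 \<le> kap s"
proof -
  obtain s0 where s0: "s0 \<in> {0..P}" "\<forall>y\<in>{0..P}. kap s0 \<le> kap y"
  proof -
    have "continuous_on {0..P} kap" using ckap by (simp add: continuous_at_imp_continuous_on)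
    thus ?thesis using continuous_attains_inf[of "{0..P}" kap] Ppos that by auto
  qed
  have "kap s0 \<le> kap s" for s using kap_red[of s] s0 by auto
  thus ?thesis by blast
qed

lemma kap_max: "\<exists>K. \<forall>s. kap s \<le> K"
proof -
  obtain s0 where s0: "s0 \<in> {0..P}" "\<forall>y\<in>{0..P}. kap y \<le> kap s0"
  proof -
    have "continuous_on {0..P} kap" using ckap by (simp add: continuous_at_imp_continuous_on)
    thus ?thesis using continuous_attains_sup[of "{0..P}" kap] Ppos that by auto
  qed
  have "kap s \<le> kap s0" for s using kap_red[of s] s0 by auto
  thus ?thesis by blast
qed

lemma vbound: "\<exists>m>0. \<forall>s. a / sqrt ((kap s)\<^sup>2 + (sin \<alpha>)\<^sup>2) \<ge> m"
proof -
  obtain K where K: "\<And>s. kap s \<le> K" using kap_max by blast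
  have K0: "K \<ge> 0" using K[of 0] kpos[of 0] by simp
  define m where "m = a / sqrt (K\<^sup>2 + (sin \<alpha>)\<^sup>2)"
  have mp: "m > 0" unfolding m_def using apos sa_pos by (simp add: add_nonneg_pos)
  have "a / sqrt ((kap s)\<^sup>2 + (sin \<alpha>)\<^sup>2) \<ge> m" for s
  proof -
    have "(kap s)\<^sup>2 \<le> K\<^sup>2" using K[of s] kpos[of s] by (simp add: power_mono)
    hence "sqrt ((kap s)\<^sup>2 + (sin \<alpha>)\<^sup>2) \<le> sqrt (K\<^sup>2 + (sin \<alpha>)\<^sup>2)" by simp
    moreover have "sqrt ((kap s)\<^sup>2 + (sin \<alpha>)\<^sup>2) > 0" using sa_pos by (simp add: add_nonneg_pos)
    ultimately show ?thesis unfolding m_def using apos by (simp add: frac_le)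
  qed
  thus ?thesis using mp by blast
qed

lemma X_surj: "\<exists>\<tau>. X \<tau> = z"
proof -
  obtain m where "m > 0" "\<And>s. a / sqrt ((kap s)\<^sup>2 + (sin \<alpha>)\<^sup>2) \<ge> m" using vbound by blast
  thus ?thesis using surj_deriv[OF Xd, of m z] by blast
qed

lemma Y_surj: "\<exists>\<tau>. Y \<tau> = z"
proof -
  obtain m where "m > 0" "\<And>s. a / sqrt ((kap s)\<^sup>2 + (sin \<alpha>)\<^sup>2) \<ge> m" using vbound by blast
  thus ?thesis using surj_deriv[OF Yd, of m z] by blast
qed

end


lemma cmono:
  fixes k1 k2 s :: real
  assumes "0 \<le> k1" "k1 \<le> k2" "s > 0"
  shows "k1 / sqrt (k1\<^sup>2 + s\<^sup>2) \<le> k2 / sqrt (k2\<^sup>2 + s\<^sup>2)"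
proof -
  have p1: "sqrt (k1\<^sup>2 + s\<^sup>2) > 0" "sqrt (k2\<^sup>2 + s\<^sup>2) > 0" using assms by (simp_all add: add_nonneg_pos)
  have "k1\<^sup>2 \<le> k2\<^sup>2" using assms by (simp add: power_mono)
  hence "k1\<^sup>2 * (k2\<^sup>2 + s\<^sup>2) \<le> k2\<^sup>2 * (k1\<^sup>2 + s\<^sup>2)" using assms by (simp add: algebra_simps mult_right_mono)
  hence "sqrt (k1\<^sup>2 * (k2\<^sup>2 + s\<^sup>2)) \<le> sqrt (k2\<^sup>2 * (k1\<^sup>2 + s\<^sup>2))" by simp
  hence "k1 * sqrt (k2\<^sup>2 + s\<^sup>2) \<le> k2 * sqrt (k1\<^sup>2 + s\<^sup>2)" using assms by (simp add: real_sqrt_mult)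
  thus ?thesis using p1 by (simp add: divide_simps mult.commute)
qed

context gk begin

lemma cos_mono: "kap s1 \<le> kap s2 \<Longrightarrow> cos (f s1) \<le> cos (f s2)"
  unfolding fcos rr_def using cmono[OF kpos _ sa_pos] by blast

lemma ch: "isCont h \<tau>" unfolding h_def[abs_def]
  by (intro continuous_intros isCont_o2[OF cX cN] isCont_o2[OF cY cD])
lemma ch3: "isCont h3 \<tau>" unfolding h3_def[abs_def]
  by (intro continuous_intros isCont_o2[OF cX cD] isCont_o2[OF cY cN])

lemma h_pos: "h \<tau> > 0"
proof -
  obtain s0 where s0: "\<And>s. kap s0 \<le> kap s" using kap_min by blast
  obtain \<tau>0 where t0: "X \<tau>0 = s0" using X_surj by blast
  have "h \<tau>0 > 0"
  proof (rule ccontr)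
    assume "\<not> h \<tau>0 > 0"
    hence "h \<tau>0 < 0" using h_ne[of \<tau>0] by linarith
    hence e: "cos (f (Y \<tau>0)) = cos (f (X \<tau>0)) * A \<tau>0 - sin (f (X \<tau>0)) * B \<tau>0" by (rule F1)
    have le: "cos (f (X \<tau>0)) \<le> cos (f (Y \<tau>0))" using cos_mono s0 t0 by simp
    have "cos (f (X \<tau>0)) * (1 - A \<tau>0) \<ge> 0" using fcos_nn A_bd[of \<tau>0] by simp
    moreover have "sin (f (X \<tau>0)) * B \<tau>0 > 0" using fsin_pos B_pos by simp
    ultimately show False using le e by (simp add: algebra_simps)
  qed
  thus ?thesis using sign_const[of h \<tau>0 \<tau>] ch h_ne by blast
qed

lemma h3_pos: "h3 \<tau> > 0"
proof -
  obtain s0 where s0: "\<And>s. kap s0 \<le> kap s" using kap_min by blast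
  obtain \<tau>1 where t1: "Y \<tau>1 = s0" using Y_surj by blast
  have "h3 \<tau>1 > 0"
  proof (rule ccontr)
    assume "\<not> h3 \<tau>1 > 0"
    hence "h3 \<tau>1 < 0" using h3_ne[of \<tau>1] by linarith
    hence e: "cos (f (X \<tau>1)) = cos (f (Y \<tau>1)) * A \<tau>1 - sin (f (Y \<tau>1)) * B \<tau>1" by (rule F2)
    have le: "cos (f (Y \<tau>1)) \<le> cos (f (X \<tau>1))" using cos_mono s0 t1 by simp
    have "cos (f (Y \<tau>1)) * (1 - A \<tau>1) \<ge> 0" using fcos_nn A_bd[of \<tau>1] by simp
    moreover have "sin (f (Y \<tau>1)) * B \<tau>1 > 0" using fsin_pos B_pos by simp
    ultimately show False using le e by (simp add: algebra_simps)
  qed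
  thus ?thesis using sign_const[of h3 \<tau>1 \<tau>] ch3 h3_ne by blast
qed

lemma fsum: "f (X \<tau>) + f (Y \<tau>) = arccos (A \<tau>)"
proof -
  define L where "L = arccos (A \<tau>)"
  have Ab: "-1 \<le> A \<tau>" "A \<tau> \<le> 1" using A_bd[of \<tau>] by auto
  have cL: "cos L = A \<tau>" unfolding L_def using Ab by simp
  have sL: "sin L = B \<tau>" unfolding L_def B_def using Ab by (simp add: sin_arccos)
  have L0: "0 \<le> L" "L \<le> pi" unfolding L_def using Ab by (auto intro: arccos_lbound arccos_ubound)
  obtain k where k: "sin (f (Y \<tau>)) = cos (f (X \<tau>)) * B \<tau> - sin (f (X \<tau>)) * A \<tau>"
      "cos (f (Y \<tau>)) = cos (f (X \<tau>)) * A \<tau> + sin (f (X \<tau>)) * B \<tau>"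
    using F3[OF h_pos h3_pos] by blast
  have s: "sin (L - f (X \<tau>)) = sin (f (Y \<tau>))" unfolding sin_diff sL cL k by (simp add: algebra_simps)
  have c: "cos (L - f (X \<tau>)) = cos (f (Y \<tau>))" unfolding cos_diff sL cL k by (simp add: algebra_simps)
  have "cos (f (Y \<tau>) - (L - f (X \<tau>))) = cos (f (Y \<tau>)) * cos (L - f (X \<tau>)) + sin (f (Y \<tau>)) * sin (L - f (X \<tau>))"
    by (rule cos_diff)
  also have "\<dots> = 1" unfolding s c by (rule sin_cos_squared_add3)
  finally have "cos (f (Y \<tau>) - (L - f (X \<tau>))) = 1" .
  then obtain n :: int where n: "f (Y \<tau>) - (L - f (X \<tau>)) = real_of_int n * 2 * pi" using cos_one_2pi_int by blast
  have b1: "f (Y \<tau>) - (L - f (X \<tau>)) < 2 * pi" using fr[of "Y \<tau>"] fr[of "X \<tau>"] L0 by linarith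
  have b2: "f (Y \<tau>) - (L - f (X \<tau>)) > - pi" using fr[of "Y \<tau>"] fr[of "X \<tau>"] L0 by linarith
  have "(1 - real_of_int n) * (2 * pi) > 0" using b1 n by (simp add: algebra_simps)
  hence "real_of_int n < 1" using pi_gt_zero by (simp add: zero_less_mult_iff)
  moreover have "(2 * real_of_int n + 1) * pi > 0" using b2 n by (simp add: algebra_simps)
  hence "real_of_int n > -1" using pi_gt_zero by (simp add: zero_less_mult_iff)
  ultimately have "n = 0" by linarith
  thus ?thesis using n unfolding L_def by simp
qed

lemma fD: "\<exists>d. (f has_real_derivative d) (at s)"
proof -
  have feq: "f = (\<lambda>s. arccos (kap s / rr s))"
  proof
    fix s show "f s = arccos (kap s / rr s)" using arccos_cos[of "f s"] fr[of s] fcos[of s] by simp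
  qed
  have "((\<lambda>s. inner (N s) (D 2 s)) has_real_derivative (inner (- kap s *\<^sub>R D 1 s) (D 2 s) + inner (N s) (D (Suc 2) s))) (at s)"
    by (rule vd_inner[OF N_deriv Dd])
  moreover have "(\<lambda>s. inner (N s) (D 2 s)) = kap" by (rule ext) (simp add: kap_def)
  ultimately obtain kd where kd: "(kap has_real_derivative kd) (at s)" by auto
  have lt: "\<bar>kap s\<bar> < rr s"
  proof -
    have "sqrt ((kap s)\<^sup>2) < sqrt ((kap s)\<^sup>2 + (sin \<alpha>)\<^sup>2)" using sa_pos by (intro real_sqrt_less_mono) simp
    thus ?thesis by (simp add: rr_def)
  qed
  hence b: "-1 < kap s / rr s" "kap s / rr s < 1" using rr_pos[of s] by (auto simp: divide_simps abs_less_iff)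
  have pos: "(kap s)\<^sup>2 + (sin \<alpha>)\<^sup>2 > 0" using sa_pos by (simp add: add_nonneg_pos)
  have q: "((\<lambda>s. (kap s)\<^sup>2 + (sin \<alpha>)\<^sup>2) has_real_derivative (2 * kap s * kd)) (at s)"
    using kd by (auto intro!: derivative_eq_intros)
  have r: "(rr has_real_derivative (inverse (sqrt ((kap s)\<^sup>2 + (sin \<alpha>)\<^sup>2)) / 2 * (2 * kap s * kd))) (at s)"
    unfolding rr_def[abs_def] by (rule DERIV_chain2[OF DERIV_real_sqrt[OF pos] q])
  have u: "((\<lambda>s. kap s / rr s) has_real_derivative ((kd * rr s - kap s * (inverse (sqrt ((kap s)\<^sup>2 + (sin \<alpha>)\<^sup>2)) / 2 * (2 * kap s * kd))) / (rr s * rr s))) (at s)"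
    using rr_pos[of s] by (intro DERIV_divide[OF kd r]) simp
  show ?thesis unfolding feq using DERIV_chain2[OF DERIV_arccos[OF b] u] by blast
qed

lemma main: "\<exists>d1 d2. ((\<lambda>\<tau>. f (X \<tau>)) has_real_derivative d1) (at t)
              \<and> ((\<lambda>\<tau>. f (Y \<tau>)) has_real_derivative d2) (at t)
              \<and> d1 + d2 = a * cot \<alpha> * (sin (f (Y t)) - sin (f (X t)))"
proof -
  obtain e1 where e1: "(f has_real_derivative e1) (at (X t))" using fD by blast
  obtain e2 where e2: "(f has_real_derivative e2) (at (Y t))" using fD by blast
  have d1: "((\<lambda>\<tau>. f (X \<tau>)) has_real_derivative e1 * vx t) (at t)" by (rule DERIV_chain2[OF e1 Xd'])
  have d2: "((\<lambda>\<tau>. f (Y \<tau>)) has_real_derivative e2 * vy t) (at t)" by (rule DERIV_chain2[OF e2 Yd'])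
  have s1: "((\<lambda>\<tau>. f (X \<tau>) + f (Y \<tau>)) has_real_derivative e1 * vx t + e2 * vy t) (at t)"
    by (rule DERIV_add[OF d1 d2])
  have Ab: "-1 < A t" "A t < 1" using A_bd[of t] by auto
  have s2: "((\<lambda>\<tau>. arccos (A \<tau>)) has_real_derivative inverse (- sqrt (1 - (A t)\<^sup>2)) * Ad t) (at t)"
    by (rule DERIV_chain2[OF DERIV_arccos[OF Ab] dA])
  have "e1 * vx t + e2 * vy t = inverse (- sqrt (1 - (A t)\<^sup>2)) * Ad t"
    by (rule dconst_eq[OF fsum s1 s2])
  also have "\<dots> = cos \<alpha> * (vy t - vx t)"
    unfolding Ad_def B_def[symmetric] using B_pos[of t] by (simp add: field_simps)
  also have "\<dots> = a * cot \<alpha> * (sin (f (Y t)) - sin (f (X t)))"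
  proof -
    have "vx t = a * sin (f (X t)) / sin \<alpha>" "vy t = a * sin (f (Y t)) / sin \<alpha>"
      using vxs(1)[of t] vys(1)[of t] sa_pos by (simp_all add: field_simps)
    thus ?thesis unfolding cot_def using sa_pos by (simp add: field_simps)
  qed
  finally show ?thesis using d1 d2 by blast
qed

end


theorem mainTheorem5:
  fixes \<gamma> :: "real \<Rightarrow> real^3" and L \<alpha> a :: real
    and X Y :: "real \<Rightarrow> real" and f :: "real \<Rightarrow> real" and t :: real
  assumes curve: "convex_sphere_curve \<gamma> L"
    and alpha: "0 < \<alpha>" "\<alpha> < pi"
    and a_pos: "a > 0"
    and gutkin: "\<And>\<tau>. chord_angle \<gamma> \<alpha> (X \<tau>) (Y \<tau>)"
    and X_deriv: "\<And>\<tau>. (X has_real_derivative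
          a / sqrt ((geod_curv \<gamma> (X \<tau>))\<^sup>2 + (sin \<alpha>)\<^sup>2)) (at \<tau>)"
    and Y_deriv: "\<And>\<tau>. (Y has_real_derivative
          a / sqrt ((geod_curv \<gamma> (Y \<tau>))\<^sup>2 + (sin \<alpha>)\<^sup>2)) (at \<tau>)"
    and f_range: "\<And>s. 0 < f s \<and> f s < pi"
    and f_cot: "\<And>s. cot (f s) = geod_curv \<gamma> s / sin \<alpha>"
  shows "\<exists>d1 d2. ((\<lambda>\<tau>. f (X \<tau>)) has_real_derivative d1) (at t)
              \<and> ((\<lambda>\<tau>. f (Y \<tau>)) has_real_derivative d2) (at t)
              \<and> d1 + d2 = a * cot \<alpha> * (sin (f (Y t)) - sin (f (X t)))"
proof -
  have cv: "L > 0" "smooth_curve \<gamma>" "\<And>s. \<gamma> (s + L) = \<gamma> s" "\<And>s. norm (\<gamma> s) = 1"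
    "\<And>s. norm (tangent \<gamma> s) = 1" "\<And>s. geod_curv \<gamma> s \<ge> 0"
    using curve unfolding convex_sphere_curve_def by auto
  obtain D :: "nat \<Rightarrow> real \<Rightarrow> real^3" where D0: "D 0 = \<gamma>"
    and Dd: "\<And>k s. (D k has_vector_derivative D (Suc k) s) (at s)"
    using cv(2) unfolding smooth_curve_def by blast
  have tg: "tangent \<gamma> = D 1"
  proof
    fix s show "tangent \<gamma> s = D 1 s" unfolding tangent_def D0[symmetric]
      using Dd[of 0 s] by (simp add: vector_derivative_at)
  qed
  have cr: "crv D" proof qed (use Dd cv(4,5) D0 tg in auto)
  have gc: "geod_curv \<gamma> s = crv.kap D s" for s
  proof -
    have "vector_derivative (D 1) (at s) = D 2 s"
      using Dd[of 1 s] by (simp add: vector_derivative_at numeral_2_eq_2)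
    thus ?thesis unfolding geod_curv_def crv.kap_def[OF cr] crv.N_def[OF cr] tg using D0 by simp
  qed
  have g: "gk D \<alpha> a L X Y f"
  proof (rule gk.intro[OF cr], unfold_locales)
    show "\<And>s. D 0 (s + L) = D 0 s" using cv(3) D0 by simp
    show "0 < L" by (rule cv(1))
    show "\<And>s. 0 \<le> crv.kap D s" using cv(6) gc by simp
    show "0 < \<alpha>" "\<alpha> < pi" "0 < a" by (rule alpha(1), rule alpha(2), rule a_pos)
    show "\<And>\<tau>. D 0 (X \<tau>) \<noteq> D 0 (Y \<tau>)" "\<And>\<tau>. D 0 (X \<tau>) \<noteq> - D 0 (Y \<tau>)"
      using gutkin unfolding chord_angle_def D0 by auto
    show "\<And>\<tau>. inner (D 1 (X \<tau>)) (geod_dir (D 0 (X \<tau>)) (D 0 (Y \<tau>))) = cos \<alpha>"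
      "\<And>\<tau>. inner (- geod_dir (D 0 (Y \<tau>)) (D 0 (X \<tau>))) (D 1 (Y \<tau>)) = cos \<alpha>"
      using gutkin unfolding chord_angle_def D0 tg by auto
    show "\<And>\<tau>. (X has_real_derivative a / sqrt ((crv.kap D (X \<tau>))\<^sup>2 + (sin \<alpha>)\<^sup>2)) (at \<tau>)"
      using X_deriv gc by simp
    show "\<And>\<tau>. (Y has_real_derivative a / sqrt ((crv.kap D (Y \<tau>))\<^sup>2 + (sin \<alpha>)\<^sup>2)) (at \<tau>)"
      using Y_deriv gc by simp
    show "\<And>s. 0 < f s \<and> f s < pi" by (rule f_range)
    show "\<And>s. cot (f s) = crv.kap D s / sin \<alpha>" using f_cot gc by simp
  qed
  show ?thesis by (rule gk.main[OF g])
qed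

end
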